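(* Let $X_0=0$ and $X_n=\sum_{j=1}^{X_{n-1}}\xi_{n,j}+\varepsilon_n$ for $n\ge1$, where $\{\xi_{n,j},\varepsilon_n\}$ are independent nonnegative integer-valued random variables with $\xi_{n,j}$, $j\in\mathbb N$, identically distributed for each $n$. Let $G_n(x)=\mathbb E x^{\xi_{n,1}}$, $H_n(x)=\mathbb E x^{\varepsilon_n}$, $\rho_n=G_n'(1)\le 1$, and $m_{n,1}=\mathbb E\varepsilon_n$. Define $\overline G_{n+1,n}(x)=x$ and $\overline G_{j,n}(x)=G_j(\overline G_{j+1,n}(x))$ for $j\le n$. Assume $\prod_{n=2}^\infty\rho_n=\rho\in(0,1)$ and $\sum_{n=1}^\infty m_{n,1}<\infty$. Then for every $j$ and $x\in[0,1]$ the limit $\overline G_{j+1,\infty}(x)=\lim_{n\to\infty}\overline G_{j+1,n}(x)$ exists, and $X_n$ converges in distribution to a random variable $Y$ with generating function $$g(x)=\prod_{j=1}^\infty H_j\big(\overline G_{j+1,\infty}(x)\big).$$ *)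

theory Defs
  imports "HOL-Probability.Probability"
begin

primrec bpi :: "(nat \<Rightarrow> nat \<Rightarrow> 'a \<Rightarrow> nat) \<Rightarrow> (nat \<Rightarrow> 'a \<Rightarrow> nat) \<Rightarrow> nat \<Rightarrow> 'a \<Rightarrow> nat" where
  "bpi xi eps 0 \<omega> = 0"
| "bpi xi eps (Suc n) \<omega> = (\<Sum>j=1..bpi xi eps n \<omega>. xi (Suc n) j \<omega>) + eps (Suc n) \<omega>"

definition pgf :: "'a measure \<Rightarrow> ('a \<Rightarrow> nat) \<Rightarrow> real \<Rightarrow> real" where
  "pgf M Z x = (\<integral>\<omega>. x ^ Z \<omega> \<partial>M)"

text \<open>Iterated composition: Gbar G j n = G j \<circ> G (j+1) \<circ> ... \<circ> G n;
  in particular Gbar G (n+1) n = id and Gbar G j n = G j \<circ> Gbar G (j+1) n for j \<le> n.\<close>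
definition Gbar :: "(nat \<Rightarrow> real \<Rightarrow> real) \<Rightarrow> nat \<Rightarrow> nat \<Rightarrow> real \<Rightarrow> real" where
  "Gbar G j n = foldr (\<lambda>k f. G k \<circ> f) [j..<Suc n] id"

end

theory Submission
  imports Defs "HOL-Library.Diagonal_Subsequence"
begin

lemma meas_nat_comp:
  assumes "X \<in> measurable M (count_space UNIV)"
  shows "(\<lambda>\<omega>. h (X \<omega>) :: real) \<in> borel_measurable M"
  using measurable_compose[OF assms, of h borel] by simp

lemma meas_nat_comp_enn:
  assumes "X \<in> measurable M (count_space UNIV)"
  shows "(\<lambda>\<omega>. h (X \<omega>) :: ennreal) \<in> borel_measurable M"
  using measurable_compose[OF assms, of h borel] by simp

context prob_space begin

lemma pgf_integrable:
  fixes x :: real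
  assumes X: "X \<in> measurable M (count_space UNIV)" and x: "0 \<le> x" "x \<le> 1"
  shows "integrable M (\<lambda>\<omega>. x ^ X \<omega>)"
proof (rule integrable_const_bound[where B=1])
  show "AE \<omega> in M. norm (x ^ X \<omega>) \<le> 1"
    using x by (auto intro!: power_le_one simp: power_abs)
qed (rule meas_nat_comp[OF X])

lemma pgf_nonneg: assumes "0 \<le> x" shows "0 \<le> pgf M X x"
  unfolding pgf_def using assms by (auto intro!: integral_nonneg_AE)

lemma pgf_le1:
  assumes X: "X \<in> measurable M (count_space UNIV)" and x: "0 \<le> x" "x \<le> 1"
  shows "pgf M X x \<le> 1"
proof -
  have "pgf M X x \<le> (\<integral>\<omega>. 1 \<partial>M)" unfolding pgf_def
    using x by (intro integral_mono pgf_integrable[OF X]) (auto intro: power_le_one)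
  then show ?thesis by (simp add: prob_space)
qed

lemma pgf_one: "pgf M X 1 = 1"
  unfolding pgf_def by (simp add: prob_space)

lemma pgf_mono:
  assumes X: "X \<in> measurable M (count_space UNIV)" and x: "0 \<le> x" "x \<le> y" "y \<le> 1"
  shows "pgf M X x \<le> pgf M X y"
  unfolding pgf_def
  using x by (intro integral_mono pgf_integrable[OF X]) (auto intro: power_mono)

lemma pgf_nn:
  assumes X: "X \<in> measurable M (count_space UNIV)" and x: "0 \<le> x" "x \<le> 1"
  shows "(\<integral>\<^sup>+\<omega>. ennreal (x ^ X \<omega>) \<partial>M) = ennreal (pgf M X x)"
  unfolding pgf_def using x
  by (intro nn_integral_eq_integral pgf_integrable[OF X]) auto

lemma pgf_cont_seq:
  assumes X: "X \<in> measurable M (count_space UNIV)"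
    and y: "\<And>n. 0 \<le> y n" "\<And>n. y n \<le> 1" "y \<longlonglongrightarrow> z"
  shows "(\<lambda>n. pgf M X (y n)) \<longlonglongrightarrow> pgf M X z"
  unfolding pgf_def
proof (rule integral_dominated_convergence[where w="\<lambda>_. 1"])
  show "(\<lambda>\<omega>. z ^ X \<omega>) \<in> borel_measurable M" by (rule meas_nat_comp[OF X])
  show "\<And>n. (\<lambda>\<omega>. y n ^ X \<omega>) \<in> borel_measurable M" by (rule meas_nat_comp[OF X])
  show "integrable M (\<lambda>_. 1::real)" by simp
  show "AE \<omega> in M. (\<lambda>n. y n ^ X \<omega>) \<longlonglongrightarrow> z ^ X \<omega>"
    using y by (auto intro!: tendsto_intros)
  show "\<And>n. AE \<omega> in M. norm (y n ^ X \<omega>) \<le> 1"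
    using y by (auto intro!: power_le_one simp: abs_mult power_abs)
qed

lemma pgf_lower_mean:
  assumes X: "X \<in> measurable M (count_space UNIV)"
    and int: "integrable M (\<lambda>\<omega>. real (X \<omega>))" and x: "0 \<le> x" "x \<le> 1"
  shows "1 - (\<integral>\<omega>. real (X \<omega>) \<partial>M) * (1 - x) \<le> pgf M X x"
proof -
  have "(\<integral>\<omega>. 1 - real (X \<omega>) * (1 - x) \<partial>M) \<le> pgf M X x"
    unfolding pgf_def
  proof (intro integral_mono pgf_integrable[OF X] x)
    show "integrable M (\<lambda>\<omega>. 1 - real (X \<omega>) * (1 - x))"
      using int by (intro Bochner_Integration.integrable_diff integrable_mult_left) auto
    fix \<omega> show "1 - real (X \<omega>) * (1 - x) \<le> x ^ X \<omega>"
      using Bernoulli_inequality[of "x - 1" "X \<omega>"] x by (simp add: algebra_simps)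
  qed
  also have "(\<integral>\<omega>. 1 - real (X \<omega>) * (1 - x) \<partial>M) = 1 - (\<integral>\<omega>. real (X \<omega>) \<partial>M) * (1 - x)"
    using int by (subst Bochner_Integration.integral_diff) (auto simp: prob_space)
  finally show ?thesis .
qed

end

context prob_space begin

lemma pgf_phi:
  assumes X: "X \<in> measurable M (count_space UNIV)" and y: "0 \<le> y" "y < 1"
  shows "(1 - pgf M X y) / (1 - y) = (\<integral>\<omega>. (\<Sum>i<X \<omega>. y ^ i) \<partial>M)"
proof -
  have "(\<integral>\<omega>. (\<Sum>i<X \<omega>. y ^ i) \<partial>M) = (\<integral>\<omega>. (1 - y ^ X \<omega>) / (1 - y) \<partial>M)"
    using y by (intro Bochner_Integration.integral_cong) (auto simp: sum_gp_strict)
  also have "\<dots> = (\<integral>\<omega>. (1 - y ^ X \<omega>) \<partial>M) / (1 - y)"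
    by simp
  also have "(\<integral>\<omega>. (1 - y ^ X \<omega>) \<partial>M) = 1 - pgf M X y"
    unfolding pgf_def using y
    by (subst Bochner_Integration.integral_diff) (auto intro!: pgf_integrable[OF X] simp: prob_space)
  finally show ?thesis by simp
qed

lemma pgf_phi_mono:
  assumes X: "X \<in> measurable M (count_space UNIV)" and y: "0 \<le> a" "a \<le> b" "b < 1"
  shows "(1 - pgf M X a) / (1 - a) \<le> (1 - pgf M X b) / (1 - b)"
proof -
  have int: "integrable M (\<lambda>\<omega>. (\<Sum>i<X \<omega>. c ^ i))" if c: "0 \<le> c" "c < 1" for c :: real
  proof (rule integrable_const_bound[where B="1 / (1 - c)"])
    show "AE \<omega> in M. norm (\<Sum>i<X \<omega>. c ^ i) \<le> 1 / (1 - c)"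
    proof (intro AE_I2)
      fix \<omega>
      have "(\<Sum>i<X \<omega>. c ^ i) = (1 - c ^ X \<omega>) / (1 - c)" using c by (simp add: sum_gp_strict)
      also have "\<dots> \<le> 1 / (1 - c)" using c by (intro divide_right_mono) auto
      finally show "norm (\<Sum>i<X \<omega>. c ^ i) \<le> 1 / (1 - c)"
        using c by (simp add: sum_nonneg)
    qed
  qed (rule meas_nat_comp[OF X])
  have "(\<integral>\<omega>. (\<Sum>i<X \<omega>. a ^ i) \<partial>M) \<le> (\<integral>\<omega>. (\<Sum>i<X \<omega>. b ^ i) \<partial>M)"
    using y by (intro integral_mono int sum_mono power_mono) auto
  then show ?thesis using pgf_phi[OF X] y by simp
qed

lemma pgf_ge_x:
  assumes X: "X \<in> measurable M (count_space UNIV)"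
    and D: "((\<lambda>x. pgf M X x) has_real_derivative r) (at_left 1)" and r: "r \<le> 1"
    and x: "0 \<le> x" "x \<le> 1"
  shows "x \<le> pgf M X x"
proof (cases "x = 1")
  case True then show ?thesis by (simp add: pgf_one)
next
  case False
  with x have x1: "x < 1" by simp
  define \<phi> where "\<phi> y = (1 - pgf M X y) / (1 - y)" for y
  have "((\<lambda>y. (pgf M X y - pgf M X 1) / (y - 1)) \<longlongrightarrow> r) (at_left 1)"
    using D unfolding has_field_derivative_iff by simp
  moreover have "(pgf M X y - pgf M X 1) / (y - 1) = \<phi> y" for y
    unfolding \<phi>_def pgf_one by (metis minus_diff_eq minus_divide_divide)
  ultimately have lim: "(\<phi> \<longlongrightarrow> r) (at_left 1)" by simp
  have ev: "eventually (\<lambda>y. \<phi> x \<le> \<phi> y) (at_left (1::real))"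
    using eventually_at_left_real[OF x1]
    by eventually_elim (use x in \<open>auto simp: \<phi>_def intro!: pgf_phi_mono[OF X]\<close>)
  have "\<phi> x \<le> r"
    by (rule tendsto_le[OF trivial_limit_at_left_real lim tendsto_const ev])
  then have "1 - pgf M X x \<le> r * (1 - x)" using x1 by (simp add: \<phi>_def field_simps)
  also have "\<dots> \<le> 1 - x" using mult_right_mono[OF r, of "1 - x"] x1 by simp
  finally show ?thesis by simp
qed
end

lemma foldr_comp_id: "foldr (\<lambda>k f. G k \<circ> f) xs g = foldr (\<lambda>k f. G k \<circ> f) xs id \<circ> g"
  by (induction xs) auto

lemma Gbar_id: "n < j \<Longrightarrow> Gbar G j n x = x"
  unfolding Gbar_def by simp

lemma Gbar_Suc: "j \<le> Suc n \<Longrightarrow> Gbar G j (Suc n) x = Gbar G j n (G (Suc n) x)"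
  unfolding Gbar_def
  by (subst upt_Suc_append) (auto simp: foldr_comp_id[of G _ "G (Suc n)"])

lemma Gbar_props:
  assumes G01: "\<And>k x. k \<ge> j \<Longrightarrow> 0 \<le> x \<Longrightarrow> x \<le> 1 \<Longrightarrow> 0 \<le> G k x \<and> G k x \<le> 1"
    and Gx: "\<And>k x. k \<ge> j \<Longrightarrow> 0 \<le> x \<Longrightarrow> x \<le> 1 \<Longrightarrow> x \<le> G k x"
    and Gmono: "\<And>k x y. k \<ge> j \<Longrightarrow> 0 \<le> x \<Longrightarrow> x \<le> y \<Longrightarrow> y \<le> 1 \<Longrightarrow> G k x \<le> G k y"
  shows "\<And>x. 0 \<le> x \<Longrightarrow> x \<le> 1 \<Longrightarrow> 0 \<le> Gbar G j n x \<and> Gbar G j n x \<le> 1 \<and> x \<le> Gbar G j n x"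
    and "\<And>x y. 0 \<le> x \<Longrightarrow> x \<le> y \<Longrightarrow> y \<le> 1 \<Longrightarrow> Gbar G j n x \<le> Gbar G j n y"
proof (induction n)
  case 0
  { case 1 show ?case
    proof (cases "j \<le> 0")
      case True
      then have "Gbar G j 0 x = G 0 x" unfolding Gbar_def by auto
      then show ?thesis using G01[of 0 x] Gx[of 0 x] True 1 by auto
    qed (use 1 Gbar_id in auto) }
  { case 2 show ?case
    proof (cases "j \<le> 0")
      case True
      then have "Gbar G j 0 z = G 0 z" for z unfolding Gbar_def by auto
      then show ?thesis using Gmono[of 0 x y] True 2 by auto
    qed (use 2 Gbar_id in auto) }
next
  case (Suc n)
  { case 1 show ?case
    proof (cases "j \<le> Suc n")
      case True
      then show ?thesis using G01[of "Suc n" x] Gx[of "Suc n" x] Suc.IH(1)[of "G (Suc n) x"] 1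
        by (auto simp: Gbar_Suc)
    qed (use 1 Gbar_id in auto) }
  { case 2 show ?case
    proof (cases "j \<le> Suc n")
      case True
      then show ?thesis using G01[of "Suc n"] Gmono[of "Suc n" x y] Suc.IH(2)[of "G (Suc n) x" "G (Suc n) y"] 2
        by (auto simp: Gbar_Suc)
    qed (use 2 Gbar_id in auto) }
qed

lemma Gbar_incr:
  assumes G01: "\<And>k x. k \<ge> j \<Longrightarrow> 0 \<le> x \<Longrightarrow> x \<le> 1 \<Longrightarrow> 0 \<le> G k x \<and> G k x \<le> 1"
    and Gx: "\<And>k x. k \<ge> j \<Longrightarrow> 0 \<le> x \<Longrightarrow> x \<le> 1 \<Longrightarrow> x \<le> G k x"
    and Gmono: "\<And>k x y. k \<ge> j \<Longrightarrow> 0 \<le> x \<Longrightarrow> x \<le> y \<Longrightarrow> y \<le> 1 \<Longrightarrow> G k x \<le> G k y"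
    and x: "0 \<le> x" "x \<le> 1"
  shows "Gbar G j n x \<le> Gbar G j (Suc n) x"
proof (cases "j \<le> Suc n")
  case True
  have "Gbar G j n x \<le> Gbar G j n (G (Suc n) x)"
    by (rule Gbar_props(2)[OF G01 Gx Gmono]) (use G01[of "Suc n" x] Gx[of "Suc n" x] x True in auto)
  then show ?thesis using True by (simp add: Gbar_Suc)
qed (simp add: Gbar_id)

lemma bpi_cong:
  assumes "\<And>m j. 1 \<le> m \<Longrightarrow> m \<le> n \<Longrightarrow> 1 \<le> j \<Longrightarrow> xi' m j \<omega>' = xi m j \<omega>"
    and "\<And>m. 1 \<le> m \<Longrightarrow> m \<le> n \<Longrightarrow> eps' m \<omega>' = eps m \<omega>"
  shows "bpi xi' eps' n \<omega>' = bpi xi eps n \<omega>"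
  using assms
proof (induction n)
  case (Suc n)
  have IH: "bpi xi' eps' n \<omega>' = bpi xi eps n \<omega>" using Suc by auto
  show ?case using Suc.prems by (simp add: IH)
qed simp

lemma nn_decomp:
  assumes Y: "Y \<in> measurable M (count_space UNIV)"
  shows "(\<integral>\<^sup>+\<omega>. h (Y \<omega>) \<partial>M) = (\<Sum>k. emeasure M {\<omega>\<in>space M. Y \<omega> = (k::nat)} * h k)"
proof -
  define A where "A k = {\<omega>\<in>space M. Y \<omega> = k}" for k
  have A: "A k \<in> sets M" for k
  proof -
    have "Y -` {k} \<inter> space M \<in> sets M" using measurable_sets[OF Y, of "{k}"] by simp
    moreover have "Y -` {k} \<inter> space M = A k" by (auto simp: A_def)
    ultimately show ?thesis by simp
  qed
  have d: "disjoint_family A" by (auto simp: disjoint_family_on_def A_def)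
  have "(\<integral>\<^sup>+\<omega>. h (Y \<omega>) \<partial>M) = (\<integral>\<^sup>+\<omega>. (\<Sum>k. h k * indicator (A k) \<omega>) \<partial>M)"
  proof (intro nn_integral_cong)
    fix x assume "x \<in> space M"
    then have "x \<in> A (Y x)" by (simp add: A_def)
    then show "h (Y x) = (\<Sum>k. h k * indicator (A k) x)"
      by (simp add: suminf_cmult_indicator[OF d])
  qed
  also have "\<dots> = (\<Sum>k. \<integral>\<^sup>+\<omega>. h k * indicator (A k) \<omega> \<partial>M)"
    using A by (intro nn_integral_suminf) auto
  also have "\<dots> = (\<Sum>k. emeasure M (A k) * h k)"
    using A by (simp add: nn_integral_cmult_indicator mult.commute)
  finally show ?thesis by (simp add: A_def)
qed

lemma add_meas_nat:
  fixes f g :: "'a \<Rightarrow> nat"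
  assumes f: "f \<in> measurable M (count_space UNIV)" and g: "g \<in> measurable M (count_space UNIV)"
  shows "(\<lambda>\<omega>. f \<omega> + g \<omega>) \<in> measurable M (count_space UNIV)"
proof -
  have "(\<lambda>\<omega>. (\<lambda>a \<omega>. a + g \<omega>) (f \<omega>) \<omega>) \<in> measurable M (count_space UNIV)"
  proof (rule measurable_compose_countable[OF _ f])
    fix a :: nat show "(\<lambda>\<omega>. a + g \<omega>) \<in> measurable M (count_space UNIV)"
      using measurable_compose[OF g, of "\<lambda>b. a + b" "count_space UNIV"] by simp
  qed
  then show ?thesis by simp
qed

lemma bpi_meas_gen:
  assumes "\<And>m j. 1 \<le> m \<Longrightarrow> m \<le> n \<Longrightarrow> 1 \<le> j \<Longrightarrow> xi m j \<in> measurable N (count_space UNIV)"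
    and "\<And>m. 1 \<le> m \<Longrightarrow> m \<le> n \<Longrightarrow> eps m \<in> measurable N (count_space UNIV)"
  shows "bpi xi eps n \<in> measurable N (count_space UNIV)"
  using assms
proof (induction n)
  case 0 then show ?case by simp
next
  case (Suc n)
  have IH: "bpi xi eps n \<in> measurable N (count_space UNIV)" using Suc by auto
  have xm: "\<And>j. 1 \<le> j \<Longrightarrow> xi (Suc n) j \<in> measurable N (count_space UNIV)"
    and em: "eps (Suc n) \<in> measurable N (count_space UNIV)" using Suc.prems by auto
  have inner: "(\<lambda>\<omega>. (\<Sum>j=1..k. xi (Suc n) j \<omega>) + eps (Suc n) \<omega>) \<in> measurable N (count_space UNIV)" for k
  proof -
    have "(\<lambda>\<omega>. (\<Sum>j=1..k. xi (Suc n) j \<omega>)) \<in> measurable N (count_space UNIV)"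
    proof (induction k)
      case (Suc k)
      then show ?case by (simp add: add_meas_nat xm)
    qed simp
    then show ?thesis by (simp add: add_meas_nat em)
  qed
  have "(\<lambda>\<omega>. (\<lambda>k \<omega>. (\<Sum>j=1..k. xi (Suc n) j \<omega>) + eps (Suc n) \<omega>) (bpi xi eps n \<omega>) \<omega>)
     \<in> measurable N (count_space UNIV)"
    by (rule measurable_compose_countable[OF inner IH])
  then show ?case by simp
qed

definition Fp :: "nat \<Rightarrow> ((nat \<times> nat) + nat \<Rightarrow> nat) \<Rightarrow> nat" where
  "Fp n = bpi (\<lambda>m j f. f (Inl (m, j))) (\<lambda>m f. f (Inr m)) n"

locale bpis = prob_space M for M :: "'a measure" +
  fixes xi :: "nat \<Rightarrow> nat \<Rightarrow> 'a \<Rightarrow> nat" and eps :: "nat \<Rightarrow> 'a \<Rightarrow> nat"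
  assumes indep: "indep_vars (\<lambda>_. count_space UNIV)
        (\<lambda>i \<omega>. case i of Inl (n, j) \<Rightarrow> xi n j \<omega> | Inr n \<Rightarrow> eps n \<omega>)
        ({Inl (n, j) | n j. n \<ge> 1 \<and> j \<ge> 1} \<union> {Inr n | n. n \<ge> 1})"
    and ident: "\<And>n j. n \<ge> 1 \<Longrightarrow> j \<ge> 1 \<Longrightarrow>
        distr M (count_space UNIV) (xi n j) = distr M (count_space UNIV) (xi n 1)"
begin

abbreviation "Idx \<equiv> ({Inl (n, j) | n j. n \<ge> 1 \<and> j \<ge> 1} \<union> {Inr n | n. n \<ge> 1}) :: ((nat \<times> nat) + nat) set"
abbreviation "Z \<equiv> (\<lambda>i \<omega>. case i of Inl (n, j) \<Rightarrow> xi n j \<omega> | Inr n \<Rightarrow> eps n \<omega>)"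

lemma xi_meas: "n \<ge> 1 \<Longrightarrow> j \<ge> 1 \<Longrightarrow> xi n j \<in> measurable M (count_space UNIV)"
  using indep unfolding indep_vars_def by (drule_tac conjunct1, drule_tac x="Inl (n,j)" in bspec) auto

lemma eps_meas: "n \<ge> 1 \<Longrightarrow> eps n \<in> measurable M (count_space UNIV)"
  using indep unfolding indep_vars_def by (drule_tac conjunct1, drule_tac x="Inr n" in bspec) auto

lemma X_meas: "bpi xi eps n \<in> measurable M (count_space UNIV)"
  by (rule bpi_meas_gen) (auto intro: xi_meas eps_meas)

definition Past :: "nat \<Rightarrow> ((nat \<times> nat) + nat) set" where
  "Past n = {i \<in> Idx. case i of Inl (m, j) \<Rightarrow> m \<le> n | Inr m \<Rightarrow> m \<le> n}"

lemma Fp_meas: "Fp n \<in> measurable (PiM (Past n) (\<lambda>_. count_space UNIV)) (count_space UNIV)"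
  unfolding Fp_def
  by (rule bpi_meas_gen) (auto simp: Past_def intro!: measurable_component_singleton)

lemma X_Fp: "bpi xi eps n \<omega> = Fp n (restrict (\<lambda>i. Z i \<omega>) (Past n))"
  unfolding Fp_def by (rule bpi_cong[symmetric]) (auto simp: Past_def)

lemma set_X_meas: "{\<omega>\<in>space M. bpi xi eps n \<omega> = k} \<in> sets M"
proof -
  have "bpi xi eps n -` {k} \<inter> space M \<in> sets M" using measurable_sets[OF X_meas, of "{k}"] by simp
  moreover have "bpi xi eps n -` {k} \<inter> space M = {\<omega>\<in>space M. bpi xi eps n \<omega> = k}" by auto
  ultimately show ?thesis by simp
qed

lemma nn_xi:
  assumes "n \<ge> 1" "j \<ge> 1" "0 \<le> z" "z \<le> 1"
  shows "(\<integral>\<^sup>+\<omega>. ennreal (z ^ xi n j \<omega>) \<partial>M) = ennreal (pgf M (xi n 1) z)"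
proof -
  have "(\<integral>\<^sup>+\<omega>. ennreal (z ^ xi n j \<omega>) \<partial>M) = (\<integral>\<^sup>+x. ennreal (z ^ x) \<partial>distr M (count_space UNIV) (xi n j))"
    using assms by (subst nn_integral_distr) (auto intro: xi_meas)
  also have "\<dots> = (\<integral>\<^sup>+x. ennreal (z ^ x) \<partial>distr M (count_space UNIV) (xi n 1))"
    using ident[of n j] assms by simp
  also have "\<dots> = (\<integral>\<^sup>+\<omega>. ennreal (z ^ xi n 1 \<omega>) \<partial>M)"
    using assms by (subst nn_integral_distr) (auto intro: xi_meas)
  also have "\<dots> = ennreal (pgf M (xi n 1) z)"
    using assms by (intro pgf_nn xi_meas) auto
  finally show ?thesis .
qed

lemma step_term:
  assumes z: "0 \<le> z" "z \<le> 1"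
  shows "(\<integral>\<^sup>+\<omega>. indicator {\<omega>\<in>space M. bpi xi eps n \<omega> = k} \<omega> *
      ((\<Prod>j\<in>{1..k}. ennreal (z ^ xi (Suc n) j \<omega>)) * ennreal (z ^ eps (Suc n) \<omega>)) \<partial>M)
   = emeasure M {\<omega>\<in>space M. bpi xi eps n \<omega> = k} *
      (ennreal (pgf M (xi (Suc n) 1) z) ^ k * ennreal (pgf M (eps (Suc n)) z))"
proof -
  define K where "K q = (case q of None \<Rightarrow> Past n | Some j \<Rightarrow> if j = 0 then {Inr (Suc n)} else {Inl (Suc n, j)})" for q
  define L where "L = insert None (Some ` {0..k})"
  have KI: "K q \<subseteq> Idx" if "q \<in> L" for q
    using that unfolding L_def by (cases q) (auto simp: K_def Past_def)
  have disj: "disjoint_family_on K L"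
    unfolding disjoint_family_on_def
  proof (intro ballI impI)
    fix q1 q2 assume "q1 \<in> L" "q2 \<in> L" "q1 \<noteq> q2"
    then show "K q1 \<inter> K q2 = {}"
      unfolding L_def by (cases q1; cases q2) (auto simp: K_def Past_def)
  qed
  have ind1: "indep_vars (\<lambda>q. PiM (K q) (\<lambda>_. count_space UNIV)) (\<lambda>q \<omega>. restrict (\<lambda>i. Z i \<omega>) (K q)) L"
    by (rule indep_vars_restrict[OF indep KI disj])
  define Y where "Y q f = (case q of None \<Rightarrow> indicator {k} (Fp n f) |
     Some j \<Rightarrow> ennreal (z ^ f (if j = 0 then Inr (Suc n) else Inl (Suc n, j))))" for q and f :: "(nat \<times> nat) + nat \<Rightarrow> nat"
  have Ymeas: "Y q \<in> borel_measurable (PiM (K q) (\<lambda>_. count_space UNIV))" if "q \<in> L" for q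
  proof (cases q)
    case None
    have "Y None = (\<lambda>f. indicator {k} (Fp n f))" by (rule ext) (simp add: Y_def)
    then show ?thesis
      using measurable_compose[OF Fp_meas, of "indicator {k} :: nat \<Rightarrow> ennreal" borel] None
      by (simp add: K_def)
  next
    case (Some j)
    define i where "i = (if j = 0 then Inr (Suc n) else Inl (Suc n, j))"
    have "i \<in> K q" by (simp add: i_def K_def Some)
    then have "(\<lambda>f. f i) \<in> measurable (PiM (K q) (\<lambda>_. count_space UNIV)) (count_space UNIV)"
      using measurable_component_singleton[of i "K q" "\<lambda>_. count_space UNIV"] by simp
    from measurable_compose[OF this, of "\<lambda>x. ennreal (z ^ x)" borel]
    have "(\<lambda>f. ennreal (z ^ f i)) \<in> borel_measurable (PiM (K q) (\<lambda>_. count_space UNIV))" by simp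
    moreover have "Y q = (\<lambda>f. ennreal (z ^ f i))" by (rule ext) (simp add: Y_def Some i_def)
    ultimately show ?thesis by simp
  qed
  have ind2: "indep_vars (\<lambda>_. borel) (\<lambda>q \<omega>. Y q (restrict (\<lambda>i. Z i \<omega>) (K q))) L"
    by (rule indep_vars_compose2[OF ind1 Ymeas])
  have fin: "finite L" by (simp add: L_def)
  have nn: "(\<integral>\<^sup>+\<omega>. (\<Prod>q\<in>L. Y q (restrict (\<lambda>i. Z i \<omega>) (K q))) \<partial>M)
      = (\<Prod>q\<in>L. \<integral>\<^sup>+\<omega>. Y q (restrict (\<lambda>i. Z i \<omega>) (K q)) \<partial>M)"
    by (rule indep_vars_nn_integral[OF fin ind2]) simp
  have split: "(\<Prod>q\<in>L. f q) = f None * (f (Some 0) * (\<Prod>j\<in>{1..k}. f (Some j)))" for f :: "nat option \<Rightarrow> ennreal"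
  proof -
    have "{0..k} = insert 0 {1..k}" by auto
    then have "L = insert None (insert (Some 0) (Some ` {1..k}))" by (simp add: L_def)
    moreover have "(\<Prod>x\<in>Some ` {1..k}. f x) = (\<Prod>j\<in>{1..k}. f (Some j))"
      by (simp add: prod.reindex)
    ultimately show ?thesis by (simp add: image_iff)
  qed
  define A where "A = {\<omega>\<in>space M. bpi xi eps n \<omega> = k}"
  have YN: "Y None (restrict (\<lambda>i. Z i \<omega>) (K None)) = indicator A \<omega>" if "\<omega> \<in> space M" for \<omega>
    using that by (simp add: Y_def K_def A_def X_Fp[symmetric] indicator_def)
  have Y0: "Y (Some 0) (restrict (\<lambda>i. Z i \<omega>) (K (Some 0))) = ennreal (z ^ eps (Suc n) \<omega>)" for \<omega>
    by (simp add: Y_def K_def)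
  have Yj: "Y (Some j) (restrict (\<lambda>i. Z i \<omega>) (K (Some j))) = ennreal (z ^ xi (Suc n) j \<omega>)" if "j \<in> {1..k}" for j \<omega>
    using that by (simp add: Y_def K_def)
  have "(\<integral>\<^sup>+\<omega>. indicator A \<omega> *
      ((\<Prod>j\<in>{1..k}. ennreal (z ^ xi (Suc n) j \<omega>)) * ennreal (z ^ eps (Suc n) \<omega>)) \<partial>M)
    = (\<integral>\<^sup>+\<omega>. (\<Prod>q\<in>L. Y q (restrict (\<lambda>i. Z i \<omega>) (K q))) \<partial>M)"
    by (intro nn_integral_cong) (simp add: split YN Y0 Yj mult_ac)
  also have "\<dots> = (\<Prod>q\<in>L. \<integral>\<^sup>+\<omega>. Y q (restrict (\<lambda>i. Z i \<omega>) (K q)) \<partial>M)"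
    by (rule nn)
  also have "\<dots> = (\<integral>\<^sup>+\<omega>. indicator A \<omega> \<partial>M) * ((\<integral>\<^sup>+\<omega>. ennreal (z ^ eps (Suc n) \<omega>) \<partial>M) *
       (\<Prod>j\<in>{1..k}. \<integral>\<^sup>+\<omega>. ennreal (z ^ xi (Suc n) j \<omega>) \<partial>M))"
    unfolding split
    by (intro arg_cong2[where f="(*)"] nn_integral_cong prod.cong refl) (simp_all add: YN Y0 Yj)
  also have "\<dots> = emeasure M A * (ennreal (pgf M (eps (Suc n)) z) * ennreal (pgf M (xi (Suc n) 1) z) ^ k)"
    using z set_X_meas by (simp add: A_def nn_xi pgf_nn eps_meas)
  finally show ?thesis by (simp add: A_def mult_ac)
qed

end

context bpis begin

lemma pgf_step:
  assumes z: "0 \<le> z" "z \<le> 1"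
  shows "pgf M (bpi xi eps (Suc n)) z = pgf M (eps (Suc n)) z * pgf M (bpi xi eps n) (pgf M (xi (Suc n) 1) z)"
proof -
  define G where "G = pgf M (xi (Suc n) 1) z"
  define H where "H = pgf M (eps (Suc n)) z"
  have G: "0 \<le> G" "G \<le> 1" using z by (auto simp: G_def intro!: pgf_nonneg pgf_le1 xi_meas)
  have H: "0 \<le> H" "H \<le> 1" using z by (auto simp: H_def intro!: pgf_nonneg pgf_le1 eps_meas)
  define A where "A k = {\<omega>\<in>space M. bpi xi eps n \<omega> = k}" for k
  define T where "T k \<omega> = (\<Prod>j\<in>{1..k}. ennreal (z ^ xi (Suc n) j \<omega>)) * ennreal (z ^ eps (Suc n) \<omega>)" for k \<omega>
  have Tmeas: "(\<lambda>\<omega>. indicator (A k) \<omega> * T k \<omega>) \<in> borel_measurable M" for k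
  proof -
    have "A k \<in> sets M" using set_X_meas by (simp add: A_def)
    moreover have "(\<lambda>\<omega>. ennreal (z ^ xi (Suc n) j \<omega>)) \<in> borel_measurable M" if "j \<in> {1..k}" for j
      using that by (intro meas_nat_comp_enn xi_meas) auto
    moreover have "(\<lambda>\<omega>. ennreal (z ^ eps (Suc n) \<omega>)) \<in> borel_measurable M"
      by (intro meas_nat_comp_enn eps_meas) auto
    ultimately show ?thesis unfolding T_def by measurable
  qed
  have pw: "ennreal (z ^ bpi xi eps (Suc n) \<omega>) = (\<Sum>k. indicator (A k) \<omega> * T k \<omega>)" if "\<omega> \<in> space M" for \<omega>
  proof -
    have "(\<Sum>k. indicator (A k) \<omega> * T k \<omega>) = (\<Sum>k\<in>{bpi xi eps n \<omega>}. indicator (A k) \<omega> * T k \<omega>)"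
      by (rule suminf_finite) (auto simp: A_def)
    also have "\<dots> = T (bpi xi eps n \<omega>) \<omega>" using that by (simp add: A_def)
    also have "\<dots> = ennreal (z ^ bpi xi eps (Suc n) \<omega>)"
      using z by (simp add: T_def power_add power_sum prod_ennreal ennreal_mult prod_nonneg)
    finally show ?thesis by simp
  qed
  have "ennreal (pgf M (bpi xi eps (Suc n)) z) = (\<integral>\<^sup>+\<omega>. ennreal (z ^ bpi xi eps (Suc n) \<omega>) \<partial>M)"
    by (rule pgf_nn[OF X_meas z, symmetric])
  also have "\<dots> = (\<integral>\<^sup>+\<omega>. (\<Sum>k. indicator (A k) \<omega> * T k \<omega>) \<partial>M)"
    by (intro nn_integral_cong) (rule pw)
  also have "\<dots> = (\<Sum>k. \<integral>\<^sup>+\<omega>. indicator (A k) \<omega> * T k \<omega> \<partial>M)"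
    by (intro nn_integral_suminf Tmeas)
  also have "\<dots> = (\<Sum>k. emeasure M (A k) * (ennreal G ^ k * ennreal H))"
    unfolding A_def T_def G_def H_def by (intro suminf_cong step_term[OF z])
  also have "\<dots> = ennreal H * (\<Sum>k. emeasure M (A k) * ennreal (G ^ k))"
  proof -
    have "(\<Sum>k. emeasure M (A k) * (ennreal G ^ k * ennreal H)) = (\<Sum>k. ennreal H * (emeasure M (A k) * ennreal (G ^ k)))"
      by (intro suminf_cong) (simp add: ennreal_power G mult_ac)
    then show ?thesis by simp
  qed
  also have "(\<Sum>k. emeasure M (A k) * ennreal (G ^ k)) = (\<integral>\<^sup>+\<omega>. ennreal (G ^ bpi xi eps n \<omega>) \<partial>M)"
    unfolding A_def by (rule nn_decomp[OF X_meas, symmetric])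
  also have "\<dots> = ennreal (pgf M (bpi xi eps n) G)"
    using G by (simp add: pgf_nn X_meas)
  also have "ennreal H * ennreal (pgf M (bpi xi eps n) G) = ennreal (H * pgf M (bpi xi eps n) G)"
    by (rule ennreal_mult[symmetric]) (use H G in \<open>auto intro: pgf_nonneg\<close>)
  finally have e: "ennreal (pgf M (bpi xi eps (Suc n)) z) = ennreal (H * pgf M (bpi xi eps n) G)" .
  have n1: "0 \<le> pgf M (bpi xi eps (Suc n)) z" by (rule pgf_nonneg[OF z(1)])
  have n2: "0 \<le> H * pgf M (bpi xi eps n) G" using H G pgf_nonneg[of G] by simp
  from e n1 n2 have "pgf M (bpi xi eps (Suc n)) z = H * pgf M (bpi xi eps n) G"
    by (metis ennreal_inj)
  then show ?thesis by (simp only: G_def H_def)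
qed

end

lemma prod_lower:
  fixes e t :: "nat \<Rightarrow> real"
  assumes "finite A" "\<And>j. j \<in> A \<Longrightarrow> 0 \<le> e j \<and> e j \<le> 1 \<and> 1 - t j \<le> e j \<and> 0 \<le> t j"
  shows "1 - (\<Sum>j\<in>A. t j) \<le> (\<Prod>j\<in>A. e j) \<and> 0 \<le> (\<Prod>j\<in>A. e j) \<and> (\<Prod>j\<in>A. e j) \<le> 1"
  using assms
proof (induction A rule: finite_induct)
  case empty then show ?case by simp
next
  case (insert a A)
  define P where "P = (\<Prod>j\<in>A. e j)"
  define S where "S = (\<Sum>j\<in>A. t j)"
  have IH: "1 - S \<le> P" "0 \<le> P" "P \<le> 1" using insert by (auto simp: P_def S_def)
  have ea: "0 \<le> e a" "e a \<le> 1" "1 - t a \<le> e a" "0 \<le> t a" using insert by auto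
  have S0: "0 \<le> S" unfolding S_def using insert by (auto intro: sum_nonneg)
  have "1 - (t a + S) \<le> e a * P"
  proof (cases "1 - S \<le> 0")
    case True
    then show ?thesis using ea IH by (smt (verit) mult_nonneg_nonneg)
  next
    case False
    have "e a * P \<ge> e a * (1 - S)" using IH ea by (intro mult_left_mono) auto
    moreover have "e a * (1 - S) \<ge> (1 - t a) * (1 - S)" using False ea by (intro mult_right_mono) auto
    moreover have "(1 - t a) * (1 - S) \<ge> 1 - (t a + S)" using ea S0 by (simp add: algebra_simps)
    ultimately show ?thesis by linarith
  qed
  moreover have "0 \<le> e a * P" using ea IH by simp
  moreover have "e a * P \<le> 1" using ea IH by (simp add: mult_le_one)
  ultimately show ?case using insert by (simp add: P_def S_def)
qed

lemma prod_limit: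
  fixes c :: "nat \<Rightarrow> nat \<Rightarrow> real" and b t :: "nat \<Rightarrow> real"
  assumes c: "\<And>j n. 1 \<le> j \<Longrightarrow> j \<le> n \<Longrightarrow> 0 \<le> c j n \<and> c j n \<le> b j \<and> 1 - t j \<le> c j n"
    and b1: "\<And>j. b j \<le> 1" and t0: "\<And>j. 0 \<le> t j" and ts: "summable t"
    and lim: "\<And>j. 1 \<le> j \<Longrightarrow> (\<lambda>n. c j n) \<longlonglongrightarrow> b j"
  shows "(\<lambda>N. \<Prod>j=1..N. b j) \<longlonglongrightarrow> (INF N. \<Prod>j=1..N. b j)"
    and "(\<lambda>n. \<Prod>j=1..n. c j n) \<longlonglongrightarrow> (INF N. \<Prod>j=1..N. b j)"
proof -
  define Pb where "Pb N = (\<Prod>j=1..N. b j)" for N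
  define P where "P = (INF N. Pb N)"
  have b0: "0 \<le> b j" if "1 \<le> j" for j using c[of j j] that by auto
  have Pb01: "0 \<le> Pb N \<and> Pb N \<le> 1" for N
    unfolding Pb_def using b0 b1 by (auto intro: prod_nonneg prod_le_1)
  have dec: "decseq Pb"
  proof (rule decseq_SucI)
    fix N show "Pb (Suc N) \<le> Pb N"
      using Pb01[of N] b1[of "Suc N"] by (simp add: Pb_def prod.cl_ivl_Suc mult_left_le)
  qed
  have bdd: "bdd_below (range Pb)" using Pb01 by (auto intro: bdd_belowI[where m=0])
  have PbP: "Pb \<longlonglongrightarrow> P" unfolding P_def by (rule LIMSEQ_decseq_INF[OF bdd dec])
  then show "(\<lambda>N. \<Prod>j=1..N. b j) \<longlonglongrightarrow> (INF N. \<Prod>j=1..N. b j)" by (simp add: Pb_def[abs_def] P_def)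
  have PleN: "P \<le> Pb N" for N unfolding P_def by (rule cINF_lower[OF bdd]) simp
  show "(\<lambda>n. \<Prod>j=1..n. c j n) \<longlonglongrightarrow> (INF N. \<Prod>j=1..N. b j)"
    unfolding Pb_def[symmetric] P_def[symmetric]
  proof (rule LIMSEQ_I)
    fix r :: real assume r: "0 < r"
    obtain N where N: "\<forall>n\<ge>N. norm (\<Sum>i. t (i + n)) < r / 2"
      using suminf_exist_split[of "r/2" t] r ts by auto
    define \<tau> where "\<tau> = (\<Sum>i. t (i + Suc N))"
    have sm: "summable (\<lambda>i. t (i + Suc N))" by (rule summable_ignore_initial_segment[OF ts])
    have t1: "0 \<le> \<tau>" unfolding \<tau>_def using t0 by (intro suminf_nonneg sm) auto
    have "norm \<tau> < r / 2" unfolding \<tau>_def using N[rule_format, of "Suc N"] by simp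
    then have \<tau>: "\<tau> < r / 2" "0 \<le> \<tau>" using t1 by auto
    have tsum: "(\<Sum>j\<in>{Suc N..n}. t j) \<le> \<tau>" for n
    proof (cases "Suc N \<le> n")
      case True
      then have "(\<Sum>j\<in>{Suc N..n}. t j) = (\<Sum>i\<in>{0..n - Suc N}. t (i + Suc N))"
        by (intro sum.reindex_bij_witness[where j="\<lambda>j. j - Suc N" and i="\<lambda>i. i + Suc N"]) auto
      also have "\<dots> \<le> \<tau>" unfolding \<tau>_def
        using t0 by (intro sum_le_suminf sm) auto
      finally show ?thesis .
    qed (use \<tau> in simp)
    have "(\<lambda>n. \<Prod>j=1..N. c j n) \<longlonglongrightarrow> Pb N"
      unfolding Pb_def by (intro tendsto_prod lim) auto
    then have ev1: "eventually (\<lambda>n. Pb N - r / 2 < (\<Prod>j=1..N. c j n)) sequentially"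
      using r by (auto dest!: order_tendstoD(1)[where a="Pb N - r/2"])
    have ev2: "eventually (\<lambda>n. Pb n < P + r) sequentially"
      using order_tendstoD(2)[OF PbP, of "P + r"] r by auto
    from eventually_conj[OF eventually_conj[OF ev1 ev2] eventually_ge_at_top[of N]]
    obtain n0 where n0: "\<And>n. n \<ge> n0 \<Longrightarrow> Pb N - r / 2 < (\<Prod>j=1..N. c j n) \<and> Pb n < P + r \<and> N \<le> n"
      by (auto simp: eventually_sequentially)
    show "\<exists>no. \<forall>n\<ge>no. norm ((\<Prod>j=1..n. c j n) - P) < r"
    proof (intro exI allI impI)
      fix n assume "n \<ge> n0"
      note nn = n0[OF this]
      have up: "(\<Prod>j=1..n. c j n) \<le> Pb n"
        unfolding Pb_def using c by (intro prod_mono) auto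
      have split: "(\<Prod>j=1..n. c j n) = (\<Prod>j=1..N. c j n) * (\<Prod>j=Suc N..n. c j n)"
      proof -
        have "{1..n} = {1..N} \<union> {Suc N..n}" using nn by auto
        then show ?thesis by (simp add: prod.union_disjoint)
      qed
      have A: "0 \<le> (\<Prod>j=1..N. c j n)" "(\<Prod>j=1..N. c j n) \<le> 1"
      proof -
        have "0 \<le> c j n \<and> c j n \<le> 1" if "j \<in> {1..N}" for j
          using c[of j n] b1[of j] that nn by auto
        then show "0 \<le> (\<Prod>j=1..N. c j n)" "(\<Prod>j=1..N. c j n) \<le> 1"
          by (auto intro: prod_nonneg prod_le_1)
      qed
      have B: "1 - \<tau> \<le> (\<Prod>j=Suc N..n. c j n)"
      proof -
        have "0 \<le> c j n \<and> c j n \<le> 1 \<and> 1 - t j \<le> c j n \<and> 0 \<le> t j" if "j \<in> {Suc N..n}" for j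
          using c[of j n] b1[of j] t0[of j] that by auto
        then have "1 - sum t {Suc N..n} \<le> (\<Prod>j = Suc N..n. c j n)"
          using prod_lower[of "{Suc N..n}" "\<lambda>j. c j n" t] by auto
        then show ?thesis using tsum[of n] by linarith
      qed
      have "(\<Prod>j=1..N. c j n) * (1 - \<tau>) \<le> (\<Prod>j=1..N. c j n) * (\<Prod>j=Suc N..n. c j n)"
        using A B by (intro mult_left_mono) auto
      moreover have "(\<Prod>j=1..N. c j n) - \<tau> \<le> (\<Prod>j=1..N. c j n) * (1 - \<tau>)"
        using A \<tau> by (simp add: algebra_simps mult_left_le)
      ultimately have low: "(\<Prod>j=1..N. c j n) - \<tau> \<le> (\<Prod>j=1..n. c j n)" using split by linarith
      have "P - r < (\<Prod>j=1..n. c j n)" using low nn \<tau> PleN[of N] by linarith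
      moreover have "(\<Prod>j=1..n. c j n) < P + r" using up nn by linarith
      ultimately show "norm ((\<Prod>j=1..n. c j n) - P) < r" by (simp add: abs_less_iff)
    qed
  qed
qed

lemma diag_conv:
  fixes u :: "nat \<Rightarrow> nat \<Rightarrow> real"
  assumes bdd: "\<And>n k. \<bar>u n k\<bar> \<le> B"
  shows "\<exists>d. strict_mono d \<and> (\<forall>k. convergent (\<lambda>n. u (d n) k))"
proof -
  let ?P = "\<lambda>k. \<lambda>s. convergent (\<lambda>n. u (s n) k)"
  interpret nat: subseqs ?P
  proof (unfold convergent_def, unfold subseqs_def, auto)
    fix k :: nat and s :: "nat \<Rightarrow> nat" assume s: "strict_mono s"
    have "bounded {-B..B}"
      using bounded_closed_interval by auto
    moreover have "\<And>n. u (s n) k \<in> {-B..B}"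
      using bdd by (simp add: abs_le_iff minus_le_iff)
    ultimately have "\<exists>l s'. strict_mono s' \<and> ((\<lambda>n. u (s n) k) \<circ> s') \<longlonglongrightarrow> l"
      using compact_Icc compact_imp_seq_compact seq_compactE by metis
    thus "\<exists>s'. strict_mono (s'::nat\<Rightarrow>nat) \<and> (\<exists>l. (\<lambda>n. u (s (s' n)) k) \<longlonglongrightarrow> l)"
      by (auto simp: comp_def)
  qed
  define d where "d = nat.diagseq"
  have subseq: "strict_mono d"
    unfolding d_def using nat.subseq_diagseq by auto
  have cnv: "?P k d" for k
  proof -
    have Pn_seqseq: "?P k (nat.seqseq (Suc k))"
      by (rule nat.seqseq_holds)
    have 1: "(\<lambda>n. u ((nat.seqseq (Suc k) \<circ> (\<lambda>n. nat.fold_reduce (Suc k) n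
      (Suc k + n))) n) k) = (\<lambda>n. u (nat.seqseq (Suc k) n) k) \<circ>
      (\<lambda>n. nat.fold_reduce (Suc k) n (Suc k + n))"
      by auto
    have 2: "?P k (d \<circ> ((+) (Suc k)))"
      unfolding d_def nat.diagseq_seqseq 1
      by (intro convergent_subseq_convergent Pn_seqseq nat.subseq_diagonal_rest)
    then obtain L where 3: "(\<lambda>n. u (d (n + Suc k)) k) \<longlonglongrightarrow> L"
      by (auto simp: add.commute dest: convergentD)
    then have "(\<lambda>n. u (d n) k) \<longlonglongrightarrow> L"
      by (rule LIMSEQ_offset)
    then show ?thesis
      by (auto simp: convergent_def)
  qed
  show ?thesis using subseq cnv by blast
qed

lemma powser_unique0:
  fixes d :: "nat \<Rightarrow> real"
  assumes s: "\<And>x. 0 < x \<Longrightarrow> x < 1 \<Longrightarrow> (\<lambda>k. d k * x ^ k) sums 0"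
    and b: "\<And>k. \<bar>d k\<bar> \<le> 1"
  shows "d k = 0"
proof (induction k rule: less_induct)
  case (less m)
  have bound: "\<bar>d m\<bar> \<le> x / (1 - x)" if x: "0 < x" "x < 1" for x
  proof -
    have z: "(\<Sum>i<m. d i * x ^ i) = 0" using less by simp
    have "(\<lambda>i. d (i + m) * x ^ (i + m)) sums 0"
      using sums_iff_shift[of "\<lambda>k. d k * x ^ k" m 0] s[OF x] z by simp
    then have "(\<lambda>i. inverse (x ^ m) * (d (i + m) * x ^ (i + m))) sums (inverse (x ^ m) * 0)"
      by (intro sums_mult) simp
    moreover have "inverse (x ^ m) * (d (i + m) * x ^ (i + m)) = d (i + m) * x ^ i" for i
      using x by (simp add: power_add field_simps)
    ultimately have s2: "(\<lambda>i. d (i + m) * x ^ i) sums 0" by simp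
    then have s3: "(\<lambda>i. d (Suc i + m) * x ^ Suc i) sums (0 - d m)"
      using sums_Suc_iff[of "\<lambda>i. d (i + m) * x ^ i" "0 - d m"] by simp
    have geo: "(\<lambda>i. x ^ Suc i) sums (x / (1 - x))"
      using sums_mult[OF geometric_sums[of x], of x] x by (simp add: field_simps)
    have l1: "0 - d m \<le> x / (1 - x)"
    proof (rule sums_le[OF _ s3 geo])
      fix i show "d (Suc i + m) * x ^ Suc i \<le> x ^ Suc i"
        using mult_right_mono[of "d (Suc i + m)" 1 "x ^ Suc i"] b[of "Suc i + m"] x by (simp add: abs_le_iff)
    qed
    have s4: "(\<lambda>i. - (d (Suc i + m) * x ^ Suc i)) sums (d m)" using sums_minus[OF s3] by simp
    moreover have "d m \<le> x / (1 - x)"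
    proof (rule sums_le[OF _ s4 geo])
      fix i show "- (d (Suc i + m) * x ^ Suc i) \<le> x ^ Suc i"
        using mult_right_mono[of "- d (Suc i + m)" 1 "x ^ Suc i"] b[of "Suc i + m"] x by (simp add: abs_le_iff)
    qed
    ultimately show ?thesis using l1 by linarith
  qed
  show "d m = 0"
  proof (rule ccontr)
    assume ne: "d m \<noteq> 0"
    define x where "x = \<bar>d m\<bar> / 3"
    have x: "0 < x" "x < 1" using ne b[of m] by (auto simp: x_def)
    have "x / (1 - x) \<le> \<bar>d m\<bar> / 2"
    proof -
      have dd: "d m * d m \<le> \<bar>d m\<bar>"
        using mult_right_mono[of "\<bar>d m\<bar>" 1 "\<bar>d m\<bar>"] b[of m] by (simp add: abs_mult[symmetric])
      show ?thesis using x b[of m] dd by (simp add: x_def field_simps)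
    qed
    moreover have "0 < \<bar>d m\<bar>" using ne by simp
    ultimately show False using bound[OF x] by linarith
  qed
qed

lemma sub_limit:
  fixes p :: "nat \<Rightarrow> nat \<Rightarrow> real" and b :: "nat \<Rightarrow> real"
  assumes p0: "\<And>n k. 0 \<le> p n k" and psum: "\<And>n. (\<lambda>k. p n k) sums 1"
    and conv: "\<And>x. 0 \<le> x \<Longrightarrow> x \<le> 1 \<Longrightarrow> (\<lambda>n. \<Sum>k. p n k * x ^ k) \<longlonglongrightarrow> g x"
    and s: "strict_mono s" and lim: "\<And>k. (\<lambda>n. p (s n) k) \<longlonglongrightarrow> b k"
  shows "\<And>k. 0 \<le> b k \<and> b k \<le> 1" and "summable b" and "suminf b \<le> 1"
    and "\<And>x. 0 \<le> x \<Longrightarrow> x < 1 \<Longrightarrow> (\<lambda>k. b k * x ^ k) sums g x"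
proof -
  have p1: "p n k \<le> 1" for n k
  proof -
    have "sum (p n) {k} \<le> suminf (p n)"
      using psum[of n] p0 by (intro sum_le_suminf) (auto simp: sums_iff)
    then show ?thesis using psum[of n] by (simp add: sums_iff)
  qed
  show b01: "0 \<le> b k \<and> b k \<le> 1" for k
  proof
    show "0 \<le> b k" by (rule LIMSEQ_le_const[OF lim[of k]]) (use p0 in auto)
    show "b k \<le> 1" by (rule LIMSEQ_le_const2[OF lim[of k]]) (use p1 in auto)
  qed
  have partial: "sum b {..<N} \<le> 1" for N
  proof -
    have "(\<lambda>n. sum (p (s n)) {..<N}) \<longlonglongrightarrow> sum b {..<N}"
      by (intro tendsto_sum lim)
    moreover have "sum (p (s n)) {..<N} \<le> 1" for n
    proof -
      have "sum (p (s n)) {..<N} \<le> suminf (p (s n))"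
        using psum[of "s n"] p0 by (intro sum_le_suminf) (auto simp: sums_iff)
      then show ?thesis using psum[of "s n"] by (simp add: sums_iff)
    qed
    ultimately show ?thesis by (intro LIMSEQ_le_const2) auto
  qed
  show sb: "summable b" using b01 partial by (intro summableI_nonneg_bounded) auto
  show "suminf b \<le> 1" using partial by (intro suminf_le_const sb)
  fix x :: real assume x: "0 \<le> x" "x < 1"
  have T: "eventually (\<lambda>n. summable (\<lambda>k. norm (p (s n) k * x ^ k))) sequentially \<and>
           summable (\<lambda>k. norm (b k * x ^ k)) \<and>
           ((\<lambda>n. suminf (\<lambda>k. p (s n) k * x ^ k)) \<longlonglongrightarrow> suminf (\<lambda>k. b k * x ^ k))"
  proof (rule tannerys_theorem[where M="\<lambda>k. x ^ k"])
    show "\<And>k. (\<lambda>n. p (s n) k * x ^ k) \<longlonglongrightarrow> b k * x ^ k" by (intro tendsto_intros lim)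
    show "\<forall>\<^sub>F (k, n) in at_top \<times>\<^sub>F sequentially. norm (p (s n) k * x ^ k) \<le> x ^ k"
    proof (rule always_eventually, safe)
      fix k n
      have "\<bar>p (s n) k\<bar> * \<bar>x ^ k\<bar> \<le> 1 * \<bar>x ^ k\<bar>"
        using p0 p1 by (intro mult_right_mono) auto
      then show "norm (p (s n) k * x ^ k) \<le> x ^ k" using x by (simp add: abs_mult)
    qed
    show "summable (\<lambda>k. x ^ k)" using x by (intro summable_geometric) auto
  qed simp
  have "(\<lambda>n. \<Sum>k. p (s n) k * x ^ k) \<longlonglongrightarrow> g x"
    using LIMSEQ_subseq_LIMSEQ[OF conv[of x] s] x by (simp add: o_def)
  moreover have "(\<lambda>n. \<Sum>k. p (s n) k * x ^ k) \<longlonglongrightarrow> suminf (\<lambda>k. b k * x ^ k)" using T by simp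
  ultimately have "suminf (\<lambda>k. b k * x ^ k) = g x" by (rule LIMSEQ_unique[rotated])
  moreover have "summable (\<lambda>k. b k * x ^ k)" using T summable_norm_cancel[of "\<lambda>k. b k * x ^ k"] by simp
  ultimately show "(\<lambda>k. b k * x ^ k) sums g x" by (simp add: sums_iff)
qed

lemma pgf_cont_thm:
  fixes p :: "nat \<Rightarrow> nat \<Rightarrow> real" and g :: "real \<Rightarrow> real" and C :: real
  assumes p0: "\<And>n k. 0 \<le> p n k" and psum: "\<And>n. (\<lambda>k. p n k) sums 1"
    and conv: "\<And>x. 0 \<le> x \<Longrightarrow> x \<le> 1 \<Longrightarrow> (\<lambda>n. \<Sum>k. p n k * x ^ k) \<longlonglongrightarrow> g x"
    and lower: "\<And>x. 0 \<le> x \<Longrightarrow> x < 1 \<Longrightarrow> 1 - C * (1 - x) \<le> g x"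
  shows "\<exists>a. (\<forall>k. 0 \<le> a k) \<and> a sums 1 \<and> (\<forall>k. (\<lambda>n. p n k) \<longlonglongrightarrow> a k)
             \<and> (\<forall>x. 0 \<le> x \<longrightarrow> x \<le> 1 \<longrightarrow> (\<lambda>k. a k * x ^ k) sums g x)"
proof -
  have p1: "p n k \<le> 1" for n k
  proof -
    have "sum (p n) {k} \<le> suminf (p n)"
      using psum[of n] p0 by (intro sum_le_suminf) (auto simp: sums_iff)
    then show ?thesis using psum[of n] by (simp add: sums_iff)
  qed
  have pb: "\<bar>p n k\<bar> \<le> 1" for n k using p0[of n k] p1[of n k] by simp
  obtain d where d: "strict_mono d" "\<And>k. convergent (\<lambda>n. p (d n) k)"
    using diag_conv[of p 1, OF pb] by blast
  define a where "a k = lim (\<lambda>n. p (d n) k)" for k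
  have lim_a: "(\<lambda>n. p (d n) k) \<longlonglongrightarrow> a k" for k
    using d(2)[of k] by (simp add: a_def convergent_LIMSEQ_iff)
  note SL = sub_limit[OF p0 psum conv d(1) lim_a]
  have full: "(\<lambda>n. p n k) \<longlonglongrightarrow> a k" for k
  proof (rule ccontr)
    assume "\<not> (\<lambda>n. p n k) \<longlonglongrightarrow> a k"
    then obtain \<epsilon> where "\<epsilon> > 0" and "infinite {n. \<not> dist (p n k) (a k) < \<epsilon>}"
      by (auto simp: tendsto_iff not_eventually INFM_iff_infinite cofinite_eq_sequentially[symmetric])
    then obtain s :: "nat \<Rightarrow> nat" where s: "\<And>n. \<not> dist (p (s n) k) (a k) < \<epsilon>" and "strict_mono s"
      using enumerate_in_set enumerate_mono by (fastforce simp: strict_mono_def)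
    have pbs: "\<bar>p (s n) k'\<bar> \<le> 1" for n k' by (rule pb)
    obtain r where r: "strict_mono r" "\<And>k'. convergent (\<lambda>n. p (s (r n)) k')"
      using diag_conv[of "\<lambda>n k'. p (s n) k'" 1, OF pbs] by blast
    define b where "b k' = lim (\<lambda>n. p (s (r n)) k')" for k'
    have lim_b: "(\<lambda>n. p ((s \<circ> r) n) k') \<longlonglongrightarrow> b k'" for k'
      using r(2)[of k'] by (simp add: b_def convergent_LIMSEQ_iff)
    have sr: "strict_mono (s \<circ> r)" using \<open>strict_mono s\<close> r(1) by (rule strict_mono_o)
    note SL2 = sub_limit[OF p0 psum conv sr lim_b]
    have "a k' - b k' = 0" for k'
    proof (rule powser_unique0)
      fix x :: real assume x: "0 < x" "x < 1"
      have "(\<lambda>k. a k * x ^ k - b k * x ^ k) sums (g x - g x)"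
        using x by (intro sums_diff SL(4) SL2(4)) auto
      then show "(\<lambda>k. (a k - b k) * x ^ k) sums 0" by (simp add: algebra_simps)
    next
      fix k' show "\<bar>a k' - b k'\<bar> \<le> 1" using SL(1)[of k'] SL2(1)[of k'] by auto
    qed
    then have "b k = a k" by simp
    then have "(\<lambda>n. p (s (r n)) k) \<longlonglongrightarrow> a k" using lim_b[of k] by simp
    then have "eventually (\<lambda>n. dist (p (s (r n)) k) (a k) < \<epsilon>) sequentially"
      using \<open>\<epsilon> > 0\<close> by (rule tendstoD)
    then show False using s by (auto simp: eventually_sequentially)
  qed
  have g1: "g 1 = 1"
  proof -
    have "(\<lambda>n. \<Sum>k. p n k * 1 ^ k) = (\<lambda>n. 1)" using psum by (simp add: sums_iff)
    then have "(\<lambda>n. 1::real) \<longlonglongrightarrow> g 1" using conv[of 1] by simp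
    then show ?thesis by (simp add: LIMSEQ_const_iff)
  qed
  have sa1: "suminf a = 1"
  proof (rule ccontr)
    assume ne: "suminf a \<noteq> 1"
    then have lt: "suminf a < 1" using SL(3) by simp
    define \<delta> where "\<delta> = (1 - suminf a) / (2 * (\<bar>C\<bar> + 1))"
    have \<delta>: "0 < \<delta>" using lt by (simp add: \<delta>_def)
    define x where "x = max 0 (1 - \<delta>)"
    have x: "0 \<le> x" "x < 1" "1 - x \<le> \<delta>" using \<delta> by (auto simp: x_def)
    have "(\<lambda>k. a k * x ^ k) sums g x" using SL(4) x by auto
    then have "g x \<le> suminf a"
      using SL(1,2) x by (intro sums_le[OF _ _ summable_sums]) (auto intro!: mult_right_le_one_le power_le_one)
    moreover have "C * (1 - x) \<le> \<bar>C\<bar> * \<delta>"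
      using x by (intro order.trans[OF abs_ge_self[of "C * (1 - x)", unfolded abs_mult]] mult_left_mono) auto
    moreover have "\<bar>C\<bar> * \<delta> < 1 - suminf a"
    proof -
      have "\<bar>C\<bar> * \<delta> = (1 - suminf a) * (\<bar>C\<bar> / (2 * (\<bar>C\<bar> + 1)))" by (simp add: \<delta>_def field_simps)
      also have "\<dots> < (1 - suminf a) * 1"
        using lt by (intro mult_strict_left_mono) (auto simp: field_simps)
      finally show ?thesis by simp
    qed
    ultimately show False using lower[OF x(1,2)] by linarith
  qed
  show ?thesis
  proof (intro exI conjI allI impI)
    show "0 \<le> a k" for k using SL(1) by auto
    show "a sums 1" using SL(2) sa1 by (simp add: sums_iff)
    show "(\<lambda>n. p n k) \<longlonglongrightarrow> a k" for k by (rule full)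
    fix x :: real assume x: "0 \<le> x" "x \<le> 1"
    show "(\<lambda>k. a k * x ^ k) sums g x"
    proof (cases "x = 1")
      case True then show ?thesis using SL(2) sa1 g1 by (simp add: sums_iff)
    qed (use x SL(4) in auto)
  qed
qed

context bpis begin

lemma Gs01: "1 \<le> k \<Longrightarrow> 0 \<le> x \<Longrightarrow> x \<le> 1 \<Longrightarrow> 0 \<le> pgf M (xi k 1) x \<and> pgf M (xi k 1) x \<le> 1"
  by (auto intro!: pgf_nonneg pgf_le1 xi_meas)

lemma pgf_formula:
  assumes "0 \<le> z" "z \<le> 1"
  shows "pgf M (bpi xi eps n) z = (\<Prod>j=1..n. pgf M (eps j) (Gbar (\<lambda>k. pgf M (xi k 1)) (j+1) n z))"
  using assms
proof (induction n arbitrary: z)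
  case 0
  show ?case unfolding pgf_def by (simp add: prob_space)
next
  case (Suc n)
  define G where "G = pgf M (xi (Suc n) 1) z"
  have G: "0 \<le> G" "G \<le> 1" using Gs01[of "Suc n" z] Suc.prems by (auto simp: G_def)
  have "pgf M (bpi xi eps (Suc n)) z = pgf M (eps (Suc n)) z * pgf M (bpi xi eps n) G"
    unfolding G_def by (rule pgf_step[OF Suc.prems])
  also have "pgf M (bpi xi eps n) G = (\<Prod>j=1..n. pgf M (eps j) (Gbar (\<lambda>k. pgf M (xi k 1)) (j+1) n G))"
    by (rule Suc.IH[OF G])
  also have "\<dots> = (\<Prod>j=1..n. pgf M (eps j) (Gbar (\<lambda>k. pgf M (xi k 1)) (j+1) (Suc n) z))"
    by (intro prod.cong refl) (simp add: Gbar_Suc G_def)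
  also have "pgf M (eps (Suc n)) z = pgf M (eps (Suc n)) (Gbar (\<lambda>k. pgf M (xi k 1)) (Suc n + 1) (Suc n) z)"
    by (simp add: Gbar_id)
  finally show ?case by (simp add: prod.cl_ivl_Suc mult.commute)
qed

end

lemma finite_K: "finite {k::nat. real k \<le> y}"
proof (rule finite_subset[of _ "{..nat \<lceil>y\<rceil>}"])
  show "{k::nat. real k \<le> y} \<subseteq> {..nat \<lceil>y\<rceil>}"
  proof
    fix k :: nat assume "k \<in> {k. real k \<le> y}"
    then have "real k \<le> y" by simp
    then have "int k \<le> \<lceil>y\<rceil>" by linarith
    then show "k \<in> {..nat \<lceil>y\<rceil>}" by simp
  qed
qed simp

context prob_space begin

lemma set_nat_meas:
  assumes Y: "Y \<in> measurable M (count_space UNIV)"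
  shows "{\<omega>\<in>space M. Y \<omega> = (k::nat)} \<in> sets M"
proof -
  have "Y -` {k} \<inter> space M \<in> sets M" using measurable_sets[OF Y, of "{k}"] by simp
  moreover have "Y -` {k} \<inter> space M = {\<omega>\<in>space M. Y \<omega> = k}" by auto
  ultimately show ?thesis by simp
qed

lemma cdf_nat:
  assumes Y: "Y \<in> measurable M (count_space UNIV)"
  shows "cdf (distr M borel (\<lambda>\<omega>. real (Y \<omega>))) y = (\<Sum>k\<in>{k. real k \<le> y}. measure M {\<omega>\<in>space M. Y \<omega> = k})"
proof -
  have "cdf (distr M borel (\<lambda>\<omega>. real (Y \<omega>))) y = measure M ((\<lambda>\<omega>. real (Y \<omega>)) -` {..y} \<inter> space M)"
    unfolding cdf_def by (rule measure_distr) (auto intro: meas_nat_comp[OF Y])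
  also have "(\<lambda>\<omega>. real (Y \<omega>)) -` {..y} \<inter> space M = (\<Union>k\<in>{k. real k \<le> y}. {\<omega>\<in>space M. Y \<omega> = k})"
    by auto
  also have "measure M \<dots> = (\<Sum>k\<in>{k. real k \<le> y}. measure M {\<omega>\<in>space M. Y \<omega> = k})"
    by (rule finite_measure_finite_Union) (auto simp: finite_K disjoint_family_on_def intro: set_nat_meas[OF Y])
  finally show ?thesis .
qed

lemma pgf_sums:
  assumes Y: "Y \<in> measurable M (count_space UNIV)" and x: "0 \<le> x" "x \<le> 1"
  shows "(\<lambda>k. measure M {\<omega>\<in>space M. Y \<omega> = k} * x ^ k) sums pgf M Y x"
proof -
  have "ennreal (pgf M Y x) = (\<integral>\<^sup>+\<omega>. ennreal (x ^ Y \<omega>) \<partial>M)"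
    by (rule pgf_nn[OF Y x, symmetric])
  also have "\<dots> = (\<Sum>k. emeasure M {\<omega>\<in>space M. Y \<omega> = k} * ennreal (x ^ k))"
    by (rule nn_decomp[OF Y])
  also have "\<dots> = (\<Sum>k. ennreal (measure M {\<omega>\<in>space M. Y \<omega> = k} * x ^ k))"
    using x by (intro suminf_cong) (simp add: emeasure_eq_measure ennreal_mult)
  finally have e: "(\<Sum>k. ennreal (measure M {\<omega>\<in>space M. Y \<omega> = k} * x ^ k)) = ennreal (pgf M Y x)" by simp
  have "(\<lambda>k. ennreal (measure M {\<omega>\<in>space M. Y \<omega> = k} * x ^ k)) sums ennreal (pgf M Y x)"
    unfolding e[symmetric] by (rule summable_sums[OF summableI])
  then show ?thesis using x by (subst (asm) sums_ennreal) (auto intro: pgf_nonneg)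
qed

end

theorem theorem6:
  fixes M :: "'a measure"
    and xi :: "nat \<Rightarrow> nat \<Rightarrow> 'a \<Rightarrow> nat"
    and eps :: "nat \<Rightarrow> 'a \<Rightarrow> nat"
    and rho :: "nat \<Rightarrow> real"
    and r :: real
  assumes P: "prob_space M"
    and indep: "prob_space.indep_vars M (\<lambda>_. count_space UNIV)
        (\<lambda>i \<omega>. case i of Inl (n, j) \<Rightarrow> xi n j \<omega> | Inr n \<Rightarrow> eps n \<omega>)
        ({Inl (n, j) | n j. n \<ge> 1 \<and> j \<ge> 1} \<union> {Inr n | n. n \<ge> 1})"
    and ident: "\<And>n j. n \<ge> 1 \<Longrightarrow> j \<ge> 1 \<Longrightarrow>
        distr M (count_space UNIV) (xi n j) = distr M (count_space UNIV) (xi n 1)"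
    and deriv: "\<And>n. n \<ge> 1 \<Longrightarrow>
        ((\<lambda>x. pgf M (xi n 1) x) has_real_derivative rho n) (at_left 1)"
    and rho_le: "\<And>n. n \<ge> 1 \<Longrightarrow> rho n \<le> 1"
    and prod_lim: "(\<lambda>N. \<Prod>n=2..N. rho n) \<longlonglongrightarrow> r"
    and r_pos: "0 < r" and r_lt: "r < 1"
    and imm_sum: "(\<Sum>n. \<integral>\<^sup>+\<omega>. ennreal (real (eps (Suc n) \<omega>)) \<partial>M) < \<infinity>"
  shows "(\<forall>j. \<forall>x\<in>{0..1}.
            convergent (\<lambda>n. Gbar (\<lambda>k. pgf M (xi k 1)) (j + 1) n x))
       \<and> (\<exists>q :: nat pmf.
            weak_conv_m (\<lambda>n. distr M borel (\<lambda>\<omega>. real (bpi xi eps n \<omega>)))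
                        (distr (measure_pmf q) borel real)
          \<and> (\<forall>x\<in>{0..1}.
               (\<lambda>N. \<Prod>j=1..N. pgf M (eps j)
                    (lim (\<lambda>n. Gbar (\<lambda>k. pgf M (xi k 1)) (j + 1) n x)))
               \<longlonglongrightarrow> pgf (measure_pmf q) (\<lambda>k. k) x))"
proof -
  interpret prob_space M by (rule P)
  interpret bpis M xi eps by (rule bpis.intro[OF P bpis_axioms.intro[OF indep ident]])
  define Gs where "Gs = (\<lambda>k. pgf M (xi k 1))"
  have G01: "\<And>k x. k \<ge> j + 1 \<Longrightarrow> 0 \<le> x \<Longrightarrow> x \<le> 1 \<Longrightarrow> 0 \<le> Gs k x \<and> Gs k x \<le> 1" for j
    unfolding Gs_def by (rule Gs01) auto
  have Gx: "\<And>k x. k \<ge> j + 1 \<Longrightarrow> 0 \<le> x \<Longrightarrow> x \<le> 1 \<Longrightarrow> x \<le> Gs k x" for j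
    unfolding Gs_def by (rule pgf_ge_x[OF xi_meas deriv rho_le]) auto
  have Gmono: "\<And>k x y. k \<ge> j + 1 \<Longrightarrow> 0 \<le> x \<Longrightarrow> x \<le> y \<Longrightarrow> y \<le> 1 \<Longrightarrow> Gs k x \<le> Gs k y" for j
    unfolding Gs_def by (rule pgf_mono[OF xi_meas]) auto
  define L where "L j x = lim (\<lambda>n. Gbar Gs (j + 1) n x)" for j x
  have Gbar01: "0 \<le> Gbar Gs (j + 1) n x \<and> Gbar Gs (j + 1) n x \<le> 1 \<and> x \<le> Gbar Gs (j + 1) n x"
    if "0 \<le> x" "x \<le> 1" for j n x
    by (rule Gbar_props(1)[OF G01 Gx Gmono that])
  have Gbar_lim: "(\<lambda>n. Gbar Gs (j + 1) n x) \<longlonglongrightarrow> L j x" if x: "0 \<le> x" "x \<le> 1" for j x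
  proof -
    have inc: "incseq (\<lambda>n. Gbar Gs (j + 1) n x)"
      by (rule incseq_SucI) (rule Gbar_incr[OF G01 Gx Gmono x])
    have "bdd_above (range (\<lambda>n. Gbar Gs (j + 1) n x))"
      using Gbar01[OF x] by (intro bdd_aboveI[where M=1]) auto
    from LIMSEQ_incseq_SUP[OF this inc] have "convergent (\<lambda>n. Gbar Gs (j + 1) n x)"
      by (auto simp: convergent_def)
    then show ?thesis by (simp add: L_def convergent_LIMSEQ_iff)
  qed
  have L01: "Gbar Gs (j + 1) n x \<le> L j x \<and> x \<le> L j x \<and> L j x \<le> 1" if x: "0 \<le> x" "x \<le> 1" for j n x
  proof -
    have inc: "incseq (\<lambda>n. Gbar Gs (j + 1) n x)"
      by (rule incseq_SucI) (rule Gbar_incr[OF G01 Gx Gmono x])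
    have "Gbar Gs (j + 1) n x \<le> L j x" by (rule incseq_le[OF inc Gbar_lim[OF x]])
    moreover have "L j x \<le> 1"
      by (rule LIMSEQ_le_const2[OF Gbar_lim[OF x]]) (use Gbar01[OF x] in auto)
    moreover have "x \<le> Gbar Gs (j + 1) n x" using Gbar01[OF x] by auto
    ultimately show ?thesis by linarith
  qed
  define m where "m j = enn2real (\<integral>\<^sup>+\<omega>. ennreal (real (eps j \<omega>)) \<partial>M)" for j
  have fin: "(\<integral>\<^sup>+\<omega>. ennreal (real (eps (Suc n) \<omega>)) \<partial>M) < \<infinity>" for n
    by (rule ennreal_suminf_lessD[OF imm_sum])
  have fin': "(\<integral>\<^sup>+\<omega>. ennreal (real (eps j \<omega>)) \<partial>M) < \<infinity>" if "1 \<le> j" for j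
    using fin[of "j - 1"] that by simp
  have int_eps: "integrable M (\<lambda>\<omega>. real (eps j \<omega>))" if "1 \<le> j" for j
    by (rule integrableI_nonneg[OF meas_nat_comp[OF eps_meas[OF that]] _ fin'[OF that]]) auto
  have m_eq: "m j = (\<integral>\<omega>. real (eps j \<omega>) \<partial>M)" if "1 \<le> j" for j
    unfolding m_def by (rule integral_eq_nn_integral[symmetric]) (auto intro: meas_nat_comp[OF eps_meas[OF that]])
  have m0: "0 \<le> m j" for j by (simp add: m_def)
  have msum: "summable (\<lambda>n. m (Suc n))"
  proof (rule summable_suminf_not_top)
    show "0 \<le> m (Suc n)" for n by (rule m0)
    have "(\<Sum>n. ennreal (m (Suc n))) = (\<Sum>n. \<integral>\<^sup>+\<omega>. ennreal (real (eps (Suc n) \<omega>)) \<partial>M)"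
      unfolding m_def using fin by (intro suminf_cong) simp
    then show "(\<Sum>n. ennreal (m (Suc n))) \<noteq> \<top>" using imm_sum by simp
  qed
  define C where "C = (\<Sum>n. m (Suc n))"
  have msumle: "(\<Sum>j=1..n. m j) \<le> C" for n
  proof -
    have "(\<Sum>j=1..n. m j) = (\<Sum>k<n. m (Suc k))" by (simp add: sum.atLeast1_atMost_eq)
    also have "\<dots> \<le> C" unfolding C_def using m0 by (intro sum_le_suminf msum) auto
    finally show ?thesis .
  qed
  have Hlow: "1 - m j * (1 - y) \<le> pgf M (eps j) y" if "1 \<le> j" "0 \<le> y" "y \<le> 1" for j y
    using pgf_lower_mean[OF eps_meas[OF that(1)] int_eps[OF that(1)] that(2,3)] m_eq[OF that(1)] by simp
  define c where "c x j n = pgf M (eps j) (Gbar Gs (j+1) n x)" for x j n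
  define b where "b x j = (if 1 \<le> j then pgf M (eps j) (L j x) else 0)" for x j
  define t where "t x j = (if 1 \<le> j then m j * (1 - x) else 0)" for x j
  have cprops: "0 \<le> c x j n \<and> c x j n \<le> b x j \<and> 1 - t x j \<le> c x j n \<and> c x j n \<le> 1"
    if x: "0 \<le> x" "x \<le> 1" and j: "1 \<le> j" for x j n
  proof -
    note G = Gbar01[OF x, of j n] and LL = L01[OF x, of j n]
    have "0 \<le> c x j n" unfolding c_def using G by (intro pgf_nonneg) auto
    moreover have "c x j n \<le> b x j" unfolding c_def b_def using G LL j
      by (auto intro!: pgf_mono[OF eps_meas])
    moreover have "c x j n \<le> 1" unfolding c_def using G j by (intro pgf_le1[OF eps_meas]) auto
    moreover have "1 - t x j \<le> c x j n"
    proof -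
      have "m j * (1 - Gbar Gs (j+1) n x) \<le> m j * (1 - x)" using G m0[of j] by (intro mult_left_mono) auto
      then show ?thesis using Hlow[OF j, of "Gbar Gs (j+1) n x"] G j by (simp add: c_def t_def)
    qed
    ultimately show ?thesis by simp
  qed
  have tsum: "summable (t x)" for x
  proof -
    have "summable (\<lambda>n. m (Suc n) * (1 - x))" by (rule summable_mult2[OF msum])
    then have "summable (\<lambda>n. t x (Suc n))" by (simp add: t_def)
    then show ?thesis by (simp add: summable_Suc_iff)
  qed
  define g where "g x = (INF N. \<Prod>j=1..N. pgf M (eps j) (L j x))" for x
  have main: "(\<lambda>N. \<Prod>j=1..N. pgf M (eps j) (L j x)) \<longlonglongrightarrow> g x \<and> (\<lambda>n. pgf M (bpi xi eps n) x) \<longlonglongrightarrow> g x"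
    if x: "0 \<le> x" "x \<le> 1" for x
  proof -
    have c: "\<And>j n. 1 \<le> j \<Longrightarrow> j \<le> n \<Longrightarrow> 0 \<le> c x j n \<and> c x j n \<le> b x j \<and> 1 - t x j \<le> c x j n"
      using cprops[OF x] by blast
    have b1: "b x j \<le> 1" for j
      unfolding b_def using L01[OF x, of j 0] x by (auto intro!: pgf_le1[OF eps_meas])
    have t0: "0 \<le> t x j" for j using m0[of j] x by (simp add: t_def)
    have lim: "(\<lambda>n. c x j n) \<longlonglongrightarrow> b x j" if "1 \<le> j" for j
      unfolding c_def b_def using that Gbar01[OF x] Gbar_lim[OF x]
      by (auto intro!: pgf_cont_seq[OF eps_meas])
    note PL = prod_limit[of "c x" "b x" "t x", OF c b1 t0 tsum lim]
    have bb: "(\<lambda>N. \<Prod>j=1..N. b x j) = (\<lambda>N. \<Prod>j=1..N. pgf M (eps j) (L j x))"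
      by (auto intro!: prod.cong simp: b_def)
    have cc: "(\<lambda>n. \<Prod>j=1..n. c x j n) = (\<lambda>n. pgf M (bpi xi eps n) x)"
      using pgf_formula[OF x] by (auto simp: c_def Gs_def)
    show ?thesis using PL unfolding bb cc by (simp add: g_def)
  qed
  have glow: "1 - C * (1 - x) \<le> g x" if x: "0 \<le> x" "x < 1" for x
  proof -
    have x': "0 \<le> x" "x \<le> 1" using x by auto
    have "1 - C * (1 - x) \<le> pgf M (bpi xi eps n) x" for n
    proof -
      have "1 - (\<Sum>j=1..n. t x j) \<le> (\<Prod>j=1..n. c x j n)"
        using prod_lower[of "{1..n}" "\<lambda>j. c x j n" "t x"] cprops[OF x'] m0 x
        by (auto simp: t_def)
      moreover have "(\<Sum>j=1..n. t x j) = (\<Sum>j=1..n. m j) * (1 - x)"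
        by (simp add: t_def sum_distrib_right)
      moreover have "(\<Sum>j=1..n. m j) * (1 - x) \<le> C * (1 - x)"
        using msumle[of n] x by (intro mult_right_mono) auto
      moreover have "(\<Prod>j=1..n. c x j n) = pgf M (bpi xi eps n) x"
        using pgf_formula[OF x'] by (simp add: c_def Gs_def)
      ultimately show ?thesis by linarith
    qed
    then show ?thesis using main[OF x'] by (intro LIMSEQ_le_const[where X="\<lambda>n. pgf M (bpi xi eps n) x"]) auto
  qed
  define p where "p n k = measure M {\<omega>\<in>space M. bpi xi eps n \<omega> = k}" for n k
  have p0: "0 \<le> p n k" for n k by (simp add: p_def)
  have psums: "(\<lambda>k. p n k * x ^ k) sums pgf M (bpi xi eps n) x" if "0 \<le> x" "x \<le> 1" for n x
    unfolding p_def by (rule pgf_sums[OF X_meas that])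
  have psum: "(\<lambda>k. p n k) sums 1" for n
    using psums[of 1 n] by (simp add: pgf_one)
  have conv: "(\<lambda>n. \<Sum>k. p n k * x ^ k) \<longlonglongrightarrow> g x" if "0 \<le> x" "x \<le> 1" for x
  proof -
    have "(\<lambda>n. \<Sum>k. p n k * x ^ k) = (\<lambda>n. pgf M (bpi xi eps n) x)"
      using psums[OF that] by (simp add: sums_iff)
    then show ?thesis using main[OF that] by simp
  qed
  obtain a where a0: "\<And>k. 0 \<le> a k" and a1: "a sums 1" and alim: "\<And>k. (\<lambda>n. p n k) \<longlonglongrightarrow> a k"
    and ag: "\<And>x. 0 \<le> x \<Longrightarrow> x \<le> 1 \<Longrightarrow> (\<lambda>k. a k * x ^ k) sums g x"
    using pgf_cont_thm[OF p0 psum conv glow] by blast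
  have emb: "(\<integral>\<^sup>+k. ennreal (a k) \<partial>count_space UNIV) = 1"
    using a0 a1 by (simp add: nn_integral_count_space_nat suminf_ennreal2 sums_iff)
  define q where "q = embed_pmf a"
  have pq: "pmf q k = a k" for k unfolding q_def by (rule pmf_embed_pmf[OF a0 emb])
  have idmeas: "(\<lambda>k::nat. k) \<in> measurable (measure_pmf q) (count_space UNIV)" by simp
  have qsingle: "measure (measure_pmf q) {\<omega> \<in> space (measure_pmf q). \<omega> = k} = a k" for k
    using measure_pmf_single[of q k] pq by simp
  have pgfq: "pgf (measure_pmf q) (\<lambda>k. k) x = g x" if "0 \<le> x" "x \<le> 1" for x
  proof -
    have "(\<lambda>k. a k * x ^ k) sums pgf (measure_pmf q) (\<lambda>k. k) x"
      using prob_space.pgf_sums[OF prob_space_measure_pmf idmeas that] by (simp add: measure_pmf_single pq)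
    then show ?thesis using ag[OF that] sums_unique2 by blast
  qed
  show ?thesis
  proof (intro conjI allI ballI exI)
    fix j x assume x: "x \<in> {0..1::real}"
    then show "convergent (\<lambda>n. Gbar (\<lambda>k. pgf M (xi k 1)) (j + 1) n x)"
      using Gbar_lim[of x j] by (auto simp: convergent_def Gs_def)
  next
    fix x assume x: "x \<in> {0..1::real}"
    then have "(\<lambda>N. \<Prod>j=1..N. pgf M (eps j) (L j x)) \<longlonglongrightarrow> pgf (measure_pmf q) (\<lambda>k. k) x"
      using main[of x] pgfq[of x] by auto
    then show "(\<lambda>N. \<Prod>j=1..N. pgf M (eps j) (lim (\<lambda>n. Gbar (\<lambda>k. pgf M (xi k 1)) (j + 1) n x)))
               \<longlonglongrightarrow> pgf (measure_pmf q) (\<lambda>k. k) x"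
      by (simp add: L_def Gs_def)
  next
    show "weak_conv_m (\<lambda>n. distr M borel (\<lambda>\<omega>. real (bpi xi eps n \<omega>))) (distr (measure_pmf q) borel real)"
      unfolding weak_conv_m_def weak_conv_def
    proof (intro allI impI)
      fix y :: real
      have "cdf (distr (measure_pmf q) borel real) y = (\<Sum>k\<in>{k. real k \<le> y}. a k)"
        using prob_space.cdf_nat[OF prob_space_measure_pmf idmeas, of y] by (simp add: measure_pmf_single pq)
      moreover have "cdf (distr M borel (\<lambda>\<omega>. real (bpi xi eps n \<omega>))) y = (\<Sum>k\<in>{k. real k \<le> y}. p n k)" for n
        unfolding p_def by (rule cdf_nat[OF X_meas])
      moreover have "(\<lambda>n. \<Sum>k\<in>{k. real k \<le> y}. p n k) \<longlonglongrightarrow> (\<Sum>k\<in>{k. real k \<le> y}. a k)"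
        by (intro tendsto_sum alim)
      ultimately show "(\<lambda>n. cdf (distr M borel (\<lambda>\<omega>. real (bpi xi eps n \<omega>))) y)
           \<longlonglongrightarrow> cdf (distr (measure_pmf q) borel real) y" by simp
    qed
  qed
qed

end
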